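(* Let $n\ge 1$. Let $H_1$ and $H_2$ be two edge-disjoint Hamilton cycles of $G_{n,2}$, and let $E_1$ and $E_2$ be two edge-disjoint directed Hamilton cycles of $Q_{2n}$ (each starting at the origin $\mathbf 0$). Then the four Hamilton cycles $f(E_1,H_1)$, $f(E_1,H_2)$, $f(E_2,H_1)$, $f(E_2,H_2)$ of $Q_{4n}$ are pairwise edge-disjoint.
   Context: The hypercube $Q_{2n}$ is realized as the graph whose vertices are the quaternary strings $q_1q_2\cdots q_n$ with $q_i\in\{0,1,2,3\}$, two strings being adjacent iff they differ in exactly one position and there by $\pm1 \pmod 4$ (this is $C_4\Box\cdots\Box C_4$, $n$ factors, which is isomorphic to the $2n$-dimensional hypercube). The origin is $\mathbf 0=00\cdots0$. For $k\ge1$, $G_{n,k}$ denotes the Cartesian product $C_{4^n}\Box\cdots\Box C_{4^n}$ ($k$ factors), with vertex set $(\mathbb Z/4^n\mathbb Z)^k$, two vertices adjacent iff they differ in exactly one coordinate and there by $\pm1 \pmod{4^n}$. A directed Hamilton cycle $E$ of $Q_{2n}$ starting at $\mathbf 0$ lists the vertices as $e_0=\mathbf 0,e_1,\dots,e_{4^n-1}$ with consecutive ones (and $e_{4^n-1},e_0$) adjacent; put $\pi_E(e_p)=p\in\mathbb Z/4^n\mathbb Z$. Identify $V(Q_{4n})$ with pairs $(u,w)$ of quaternary strings of length $n$ (the first $n$ digits and the last $n$ digits), so $Q_{4n}=Q_{2n}\Box Q_{2n}$. The map $\Phi_E(u,w)=(\pi_E(u),\pi_E(w))$ is a bijection $V(Q_{4n})\to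 V(G_{n,2})$ such that $\Phi_E^{-1}$ sends every edge of $G_{n,2}$ to an edge of $Q_{4n}$. For a Hamilton cycle $H$ of $G_{n,2}$, $f(E,H):=\Phi_E^{-1}(H)$, a Hamilton cycle of $Q_{4n}$. *)

theory Defs
  imports Main
begin

(* Quaternary strings of length n: vertices of Q_{2n} = C_4 \<box> ... \<box> C_4 *)
definition quat_strings :: "nat \<Rightarrow> nat list set" where
  "quat_strings n = {q. length q = n \<and> (\<forall>x\<in>set q. x < 4)}"

definition Q_adj :: "nat list \<Rightarrow> nat list \<Rightarrow> bool" where
  "Q_adj q r \<longleftrightarrow> length q = length r \<and>
     (\<exists>i<length q. (\<forall>j<length q. j \<noteq> i \<longrightarrow> q ! j = r ! j) \<and>
        (r ! i = (q ! i + 1) mod 4 \<or> q ! i = (r ! i + 1) mod 4))"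

(* G_{n,2} = C_{4^n} \<box> C_{4^n}, vertex set (Z/4^n Z)^2 represented by {0..<4^n}^2 *)
definition G_verts :: "nat \<Rightarrow> (nat \<times> nat) set" where
  "G_verts n = {..<4^n} \<times> {..<4^n}"

definition G_adj :: "nat \<Rightarrow> nat \<times> nat \<Rightarrow> nat \<times> nat \<Rightarrow> bool" where
  "G_adj n x y \<longleftrightarrow>
     (fst x = fst y \<and> (snd y = (snd x + 1) mod 4^n \<or> snd x = (snd y + 1) mod 4^n)) \<or>
     (snd x = snd y \<and> (fst y = (fst x + 1) mod 4^n \<or> fst x = (fst y + 1) mod 4^n))"

definition ham_cycle :: "'a set \<Rightarrow> ('a \<Rightarrow> 'a \<Rightarrow> bool) \<Rightarrow> 'a list \<Rightarrow> bool" where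
  "ham_cycle V adj xs \<longleftrightarrow> distinct xs \<and> set xs = V \<and>
     (\<forall>i<length xs. adj (xs ! i) (xs ! ((i + 1) mod length xs)))"

definition cyc_edges :: "'a list \<Rightarrow> 'a set set" where
  "cyc_edges xs = {{xs ! i, xs ! ((i + 1) mod length xs)} | i. i < length xs}"

definition dir_ham_Q :: "nat \<Rightarrow> nat list list \<Rightarrow> bool" where
  "dir_ham_Q n E \<longleftrightarrow> ham_cycle (quat_strings n) Q_adj E \<and> E ! 0 = replicate n 0"

definition pi_E :: "nat list list \<Rightarrow> nat list \<Rightarrow> nat" where
  "pi_E E v = (THE p. p < length E \<and> E ! p = v)"

(* Phi_E(u,w) = (pi_E u, pi_E w), vertices of Q_{4n} identified with pairs (u,w) *)
definition Phi_E :: "nat list list \<Rightarrow> nat list \<times> nat list \<Rightarrow> nat \<times> nat" where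
  "Phi_E E uw = (pi_E E (fst uw), pi_E E (snd uw))"

definition f_EH :: "nat \<Rightarrow> nat list list \<Rightarrow> (nat \<times> nat) list \<Rightarrow> (nat list \<times> nat list) list" where
  "f_EH n E H = map (inv_into (quat_strings n \<times> quat_strings n) (Phi_E E)) H"

end

theory Submission
  imports Defs
begin

definition gE :: "nat list list \<Rightarrow> nat \<times> nat \<Rightarrow> nat list \<times> nat list" where
  "gE E = (\<lambda>(a,b). (E!a, E!b))"

lemma card_quat: "card (quat_strings n) = 4^n"
proof -
  have "quat_strings n = {xs. set xs \<subseteq> {..<4::nat} \<and> length xs = n}"
    unfolding quat_strings_def by auto
  then show ?thesis by (simp add: card_lists_length_eq)
qed

lemma len_E: "dir_ham_Q n E \<Longrightarrow> length E = 4^n"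
  unfolding dir_ham_Q_def ham_cycle_def
  by (metis card_quat distinct_card)

lemma pi_nth: "distinct E \<Longrightarrow> i < length E \<Longrightarrow> pi_E E (E!i) = i"
  unfolding pi_E_def
  by (rule the_equality) (auto simp: nth_eq_iff_index_eq)
lemma pi_in: "distinct E \<Longrightarrow> v \<in> set E \<Longrightarrow> pi_E E v < length E \<and> E ! (pi_E E v) = v"
  by (metis in_set_conv_nth pi_nth)
lemma f_EH_eq:
  assumes d: "distinct E" and s: "set E = quat_strings n" and l: "length E = 4^n" and H: "set H \<subseteq> G_verts n"
  shows "f_EH n E H = map (gE E) H"
proof -
  have inj: "inj_on (Phi_E E) (quat_strings n \<times> quat_strings n)"
  proof (rule inj_onI)
    fix x y assume x: "x \<in> quat_strings n \<times> quat_strings n" and y: "y \<in> quat_strings n \<times> quat_strings n"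
      and eq: "Phi_E E x = Phi_E E y"
    have "E ! pi_E E (fst x) = fst x" "E ! pi_E E (snd x) = snd x"
         "E ! pi_E E (fst y) = fst y" "E ! pi_E E (snd y) = snd y"
      using pi_in[OF d] x y s by auto
    moreover have "pi_E E (fst x) = pi_E E (fst y)" "pi_E E (snd x) = pi_E E (snd y)"
      using eq unfolding Phi_E_def by auto
    ultimately show "x = y" by (metis prod_eqI)
  qed
  show ?thesis unfolding f_EH_def
  proof (rule map_cong[OF refl])
    fix p assume "p \<in> set H"
    then have "p \<in> G_verts n" using H by blast
    then obtain a b where p: "p = (a,b)" "a < 4^n" "b < 4^n" unfolding G_verts_def by auto
    have "E!a \<in> set E" "E!b \<in> set E" using p l by auto
    then have mem: "gE E p \<in> quat_strings n \<times> quat_strings n"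
      using p(1) s by (simp add: gE_def)
    have "Phi_E E (gE E p) = p" using p l d pi_nth[OF d] by (simp add: gE_def Phi_E_def)
    then show "inv_into (quat_strings n \<times> quat_strings n) (Phi_E E) p = gE E p"
      using inv_into_f_eq[OF inj mem] by simp
  qed
qed
lemma cyc_map: "cyc_edges (map g xs) = (\<lambda>e. g ` e) ` cyc_edges xs"
proof -
  have m: "\<And>i. i < length xs \<Longrightarrow> map g xs ! ((i+1) mod length xs) = g (xs ! ((i+1) mod length xs))"
  proof -
    fix i assume "i < length xs"
    then have "(i+1) mod length xs < length xs" by (metis mod_less_divisor not_less_zero neq0_conv)
    then show "map g xs ! ((i+1) mod length xs) = g (xs ! ((i+1) mod length xs))" by simp
  qed
  show ?thesis unfolding cyc_edges_def
  proof (intro set_eqI iffI)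
    fix e assume "e \<in> {{map g xs ! i, map g xs ! ((i + 1) mod length (map g xs))} |i. i < length (map g xs)}"
    then obtain i where i: "i < length xs" "e = {map g xs ! i, map g xs ! ((i + 1) mod length (map g xs))}" by auto
    then have "e = g ` {xs ! i, xs ! ((i + 1) mod length xs)}" using m by simp
    then show "e \<in> (\<lambda>e. g ` e) ` {{xs ! i, xs ! ((i + 1) mod length xs)} |i. i < length xs}"
      using i(1) by blast
  next
    fix e assume "e \<in> (\<lambda>e. g ` e) ` {{xs ! i, xs ! ((i + 1) mod length xs)} |i. i < length xs}"
    then obtain i where i: "i < length xs" "e = g ` {xs ! i, xs ! ((i + 1) mod length xs)}" by auto
    then have "e = {map g xs ! i, map g xs ! ((i + 1) mod length (map g xs))}" using m by simp
    then show "e \<in> {{map g xs ! i, map g xs ! ((i + 1) mod length (map g xs))} |i. i < length (map g xs)}"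
      using i(1) by (simp only: length_map) blast
  qed
qed

lemma mod_lt: "i < length xs \<Longrightarrow> (i+1) mod length xs < length xs"
  by (metis mod_less_divisor not_less_zero neq0_conv)

lemma cyc_sub: "e \<in> cyc_edges xs \<Longrightarrow> e \<subseteq> set xs"
proof -
  assume "e \<in> cyc_edges xs"
  then obtain i where i: "i < length xs" "e = {xs ! i, xs ! ((i + 1) mod length xs)}"
    unfolding cyc_edges_def by blast
  then show ?thesis using nth_mem[OF i(1)] nth_mem[OF mod_lt[OF i(1)]] by blast
qed

lemma no_single:
  assumes "distinct xs" "length xs \<ge> 2" shows "{v} \<notin> cyc_edges xs"
proof
  assume "{v} \<in> cyc_edges xs"
  then obtain i where i: "i < length xs" "{v} = {xs!i, xs!((i+1) mod length xs)}"
    unfolding cyc_edges_def by auto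
  have ne: "i \<noteq> (i+1) mod length xs"
    using i(1) assms(2)
  proof (cases "i + 1 < length xs")
    case True then show ?thesis by simp
  next
    case False
    then have "i + 1 = length xs" using i(1) by linarith
    then show ?thesis using assms(2) by simp
  qed
  have "xs!i = xs!((i+1) mod length xs)" using i(2) by auto
  then show False using ne i(1) assms(1) mod_lt[OF i(1)] nth_eq_iff_index_eq by blast
qed

lemma E_edge0:
  assumes b: "b < length E" and b': "b' < length E"
    and adj: "b' = (b + 1) mod length E \<or> b = (b' + 1) mod length E"
  shows "{E!b, E!b'} \<in> cyc_edges E"
  using adj
proof
  assume h: "b' = (b + 1) mod length E"
  have "{E!b, E!b'} = {E ! b, E ! ((b + 1) mod length E)}" by (simp only: h)
  then show ?thesis unfolding cyc_edges_def using b by blast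
next
  assume h: "b = (b' + 1) mod length E"
  have "{E!b, E!b'} = {E!b', E!((b'+1) mod length E)}" by (simp only: h insert_commute)
  then show ?thesis unfolding cyc_edges_def using b' by blast
qed

lemma E_edge:
  assumes l: "length E = 4^n" and b: "b < 4^n" and b': "b' < 4^n"
    and adj: "b' = (b + 1) mod 4^n \<or> b = (b' + 1) mod 4^n"
  shows "{E!b, E!b'} \<in> cyc_edges E"
  using E_edge0[of b E b'] b b' adj unfolding l by blast

lemma edge_form:
  assumes E: "dir_ham_Q n E" and H: "ham_cycle (G_verts n) (G_adj n) H"
    and e: "e \<in> cyc_edges (map (gE E) H)"
  shows "\<exists>x y y'. e = {(x,y),(x,y')} \<and> {y,y'} \<in> cyc_edges E
       \<or> e = {(y,x),(y',x)} \<and> {y,y'} \<in> cyc_edges E"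
proof -
  have l: "length E = 4^n" using len_E[OF E] .
  from e obtain e0 where e0: "e0 \<in> cyc_edges H" "e = gE E ` e0"
    unfolding cyc_map by blast
  from e0(1) obtain i where i: "i < length H" and e0': "e0 = {H!i, H!((i+1) mod length H)}"
    unfolding cyc_edges_def by blast
  have e': "e = gE E ` {H!i, H!((i+1) mod length H)}" using e0(2) e0' by simp
  define p where "p = H!i"
  define q where "q = H!((i+1) mod length H)"
  have pin: "p \<in> G_verts n" using H nth_mem[OF i] unfolding ham_cycle_def p_def by blast
  have qin: "q \<in> G_verts n" using H nth_mem[OF mod_lt[OF i]] unfolding ham_cycle_def q_def
    by blast
  have adj: "G_adj n p q" using H i unfolding ham_cycle_def p_def q_def by blast
  obtain a b where p: "p = (a,b)" by force
  obtain a' b' where q: "q = (a',b')" by force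
  have ab: "a < 4^n" "b < 4^n" "a' < 4^n" "b' < 4^n" using pin qin p q unfolding G_verts_def by auto
  have e2: "e = {(E!a, E!b), (E!a', E!b')}" using e' p q unfolding p_def[symmetric] q_def[symmetric] by (simp add: gE_def)
  from adj p q have "(a = a' \<and> (b' = (b + 1) mod 4^n \<or> b = (b' + 1) mod 4^n)) \<or>
     (b = b' \<and> (a' = (a + 1) mod 4^n \<or> a = (a' + 1) mod 4^n))"
    unfolding G_adj_def by auto
  then show ?thesis
  proof
    assume h: "a = a' \<and> (b' = (b + 1) mod 4^n \<or> b = (b' + 1) mod 4^n)"
    then have "{E!b, E!b'} \<in> cyc_edges E" using E_edge[OF l ab(2) ab(4)] by auto
    then show ?thesis using e2 h by blast
  next
    assume h: "b = b' \<and> (a' = (a + 1) mod 4^n \<or> a = (a' + 1) mod 4^n)"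
    then have "{E!a, E!a'} \<in> cyc_edges E" using E_edge[OF l ab(1) ab(3)] by auto
    then show ?thesis using e2 h by blast
  qed
qed

lemma doubleton_eq: "{p, q} = {r, s} \<Longrightarrow> (p = r \<and> q = s) \<or> (p = s \<and> q = r)"
  by (metis doubleton_eq_iff)

lemma cross_disj:
  assumes E1: "dir_ham_Q n E1" and E2: "dir_ham_Q n E2" and n: "n \<ge> 1"
    and dj: "cyc_edges E1 \<inter> cyc_edges E2 = {}"
    and H: "ham_cycle (G_verts n) (G_adj n) H" and H': "ham_cycle (G_verts n) (G_adj n) H'"
  shows "cyc_edges (map (gE E1) H) \<inter> cyc_edges (map (gE E2) H') = {}"
proof (rule ccontr)
  assume "cyc_edges (map (gE E1) H) \<inter> cyc_edges (map (gE E2) H') \<noteq> {}"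
  then obtain e where e1: "e \<in> cyc_edges (map (gE E1) H)" and e2: "e \<in> cyc_edges (map (gE E2) H')" by auto
  have "(4::nat)^1 \<le> 4^n" using n by (intro power_increasing) auto
  then have big: "length E1 \<ge> 2" "length E2 \<ge> 2" using len_E[OF E1] len_E[OF E2] by auto
  have d1: "distinct E1" and d2: "distinct E2" using E1 E2 unfolding dir_ham_Q_def ham_cycle_def by auto
  note ns1 = no_single[OF d1 big(1)] and ns2 = no_single[OF d2 big(2)]
  from edge_form[OF E1 H e1] obtain x y y' where
    A: "e = {(x,y),(x,y')} \<and> {y,y'} \<in> cyc_edges E1 \<or> e = {(y,x),(y',x)} \<and> {y,y'} \<in> cyc_edges E1" by blast
  from edge_form[OF E2 H' e2] obtain u w w' where
    B: "e = {(u,w),(u,w')} \<and> {w,w'} \<in> cyc_edges E2 \<or> e = {(w,u),(w',u)} \<and> {w,w'} \<in> cyc_edges E2" by blast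
  from A B show False
  proof (elim disjE conjE)
    assume "e = {(x,y),(x,y')}" "{y,y'} \<in> cyc_edges E1" "e = {(u,w),(u,w')}" "{w,w'} \<in> cyc_edges E2"
    then show False using dj by (auto dest!: doubleton_eq simp: insert_commute)
  next
    assume "e = {(y,x),(y',x)}" "{y,y'} \<in> cyc_edges E1" "e = {(w,u),(w',u)}" "{w,w'} \<in> cyc_edges E2"
    then show False using dj by (auto dest!: doubleton_eq simp: insert_commute)
  next
    assume "e = {(x,y),(x,y')}" "{y,y'} \<in> cyc_edges E1" "e = {(w,u),(w',u)}" "{w,w'} \<in> cyc_edges E2"
    then show False using ns1 ns2 by (auto dest!: doubleton_eq)
  next
    assume "e = {(y,x),(y',x)}" "{y,y'} \<in> cyc_edges E1" "e = {(u,w),(u,w')}" "{w,w'} \<in> cyc_edges E2"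
    then show False using ns1 ns2 by (auto dest!: doubleton_eq)
  qed
qed

lemma same_disj:
  assumes E: "dir_ham_Q n E"
    and H1: "ham_cycle (G_verts n) (G_adj n) H1" and H2: "ham_cycle (G_verts n) (G_adj n) H2"
    and dj: "cyc_edges H1 \<inter> cyc_edges H2 = {}"
  shows "cyc_edges (map (gE E) H1) \<inter> cyc_edges (map (gE E) H2) = {}"
proof -
  have l: "length E = 4^n" using len_E[OF E] .
  have d: "distinct E" using E unfolding dir_ham_Q_def ham_cycle_def by auto
  have inj: "inj_on (gE E) (G_verts n)"
  proof (rule inj_onI)
    fix x y assume x: "x \<in> G_verts n" and y: "y \<in> G_verts n" and eq: "gE E x = gE E y"
    obtain a b where xa: "x = (a,b)" by force
    obtain a' b' where ya: "y = (a',b')" by force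
    have lt: "a < length E" "b < length E" "a' < length E" "b' < length E"
      using x y xa ya l unfolding G_verts_def by auto
    have "E!a = E!a'" "E!b = E!b'" using eq xa ya unfolding gE_def by auto
    then have "a = a'" "b = b'" using lt d by (simp_all add: nth_eq_iff_index_eq)
    then show "x = y" using xa ya by simp
  qed
  have s1: "\<forall>e\<in>cyc_edges H1. e \<subseteq> G_verts n" using H1 cyc_sub unfolding ham_cycle_def by blast
  have s2: "\<forall>e\<in>cyc_edges H2. e \<subseteq> G_verts n" using H2 cyc_sub unfolding ham_cycle_def by blast
  show ?thesis unfolding cyc_map
  proof (rule ccontr)
    assume "(\<lambda>e. gE E ` e) ` cyc_edges H1 \<inter> (\<lambda>e. gE E ` e) ` cyc_edges H2 \<noteq> {}"
    then obtain e1 e2 where "e1 \<in> cyc_edges H1" "e2 \<in> cyc_edges H2" "gE E ` e1 = gE E ` e2" by auto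
    moreover then have "e1 = e2" using inj s1 s2 by (meson inj_on_image_eq_iff)
    ultimately show False using dj by auto
  qed
qed

theorem lemma1:
  fixes n :: nat
    and H1 H2 :: "(nat \<times> nat) list"
    and E1 E2 :: "nat list list"
  assumes "n \<ge> 1"
    and "ham_cycle (G_verts n) (G_adj n) H1"
    and "ham_cycle (G_verts n) (G_adj n) H2"
    and "cyc_edges H1 \<inter> cyc_edges H2 = {}"
    and "dir_ham_Q n E1"
    and "dir_ham_Q n E2"
    and "cyc_edges E1 \<inter> cyc_edges E2 = {}"
  shows "let C = [f_EH n E1 H1, f_EH n E1 H2, f_EH n E2 H1, f_EH n E2 H2]
         in \<forall>i<4. \<forall>j<4. i \<noteq> j \<longrightarrow> cyc_edges (C ! i) \<inter> cyc_edges (C ! j) = {}"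
proof -
  have dd1: "distinct E1" "set E1 = quat_strings n" "length E1 = 4^n"
    using assms(5) len_E unfolding dir_ham_Q_def ham_cycle_def by auto
  have dd2: "distinct E2" "set E2 = quat_strings n" "length E2 = 4^n"
    using assms(6) len_E unfolding dir_ham_Q_def ham_cycle_def by auto
  have sH1: "set H1 \<subseteq> G_verts n" and sH2: "set H2 \<subseteq> G_verts n"
    using assms(2,3) unfolding ham_cycle_def by auto
  have dj21: "cyc_edges E2 \<inter> cyc_edges E1 = {}" using assms(7) by blast
  have dh21: "cyc_edges H2 \<inter> cyc_edges H1 = {}" using assms(4) by blast
  note eqs = f_EH_eq[OF dd1 sH1] f_EH_eq[OF dd1 sH2] f_EH_eq[OF dd2 sH1] f_EH_eq[OF dd2 sH2]
  note S = same_disj[OF assms(5) assms(2) assms(3) assms(4)] same_disj[OF assms(5) assms(3) assms(2) dh21]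
    same_disj[OF assms(6) assms(2) assms(3) assms(4)] same_disj[OF assms(6) assms(3) assms(2) dh21]
  note X = cross_disj[OF assms(5) assms(6) assms(1) assms(7)] cross_disj[OF assms(6) assms(5) assms(1) dj21]
  have X1: "cyc_edges (map (gE E1) Ha) \<inter> cyc_edges (map (gE E2) Hb) = {}"
    and X2: "cyc_edges (map (gE E2) Ha) \<inter> cyc_edges (map (gE E1) Hb) = {}"
    if "Ha \<in> {H1,H2}" "Hb \<in> {H1,H2}" for Ha Hb
    using that X assms(2,3) by auto
  show ?thesis unfolding Let_def eqs
  proof (intro allI impI)
    fix i j :: nat assume "i < 4" "j < 4" "i \<noteq> j"
    note XX = X1[of H1 H1] X1[of H1 H2] X1[of H2 H1] X1[of H2 H2] X2[of H1 H1] X2[of H1 H2] X2[of H2 H1] X2[of H2 H2]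
    have "i \<in> {0,1,2,3}" "j \<in> {0,1,2,3}" using \<open>i < 4\<close> \<open>j < 4\<close> by auto
    then show "cyc_edges ([map (gE E1) H1, map (gE E1) H2, map (gE E2) H1, map (gE E2) H2] ! i) \<inter>
          cyc_edges ([map (gE E1) H1, map (gE E1) H2, map (gE E2) H1, map (gE E2) H2] ! j) = {}"
      using \<open>i \<noteq> j\<close> S XX by auto
  qed
qed

end
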